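(* Let $T/2<\tilde t<T$. There exist $0<\delta<\sqrt{T/2}$ depending only on $n,p,\Omega,T$ and $C>0$ depending only on $n,p,\Omega$ such that $$\sup_{0<r<\delta/\sqrt2}\beta(r)\le C\sup_{\tilde x\in\Omega}\int_{\tilde t-\delta^2}^{\tilde t}B^+_{(\tilde x,\tilde t)}(t)\,dt.$$
   Context: Standing setting: $n\ge1$, $p>1$, $\Omega\subset\mathbf{R}^n$ is a uniformly $C^{2+\alpha}$ domain ($0<\alpha<1$), possibly non-convex and unbounded, and $u$ is a classical (possibly sign-changing) solution of $u_t=\Delta u+|u|^{p-1}u$ in $\Omega\times(0,T)$, $u=0$ on $\partial\Omega\times(0,T)$, $u(\cdot,0)=u_0\in L^\infty(\Omega)$, with finite maximal existence time $T$; $\nabla u,\nabla^2u,u_t$ are continuous and bounded on $\overline\Omega\times[T_1,T_2]$ for each $0<T_1<T_2<T$. Let $K_{(\tilde x,\tilde t)}(x,t)=(\tilde t-t)^{-n/2}e^{-|x-\tilde x|^2/(4(\tilde t-t))}$, $\nu_x$ the exterior unit normal at $x\in\partial\Omega$, and $$B^\pm_{(\tilde x,\tilde t)}(t):=(\tilde t-t)^{\frac{2}{p-1}}\int_{\partial\Omega}((x-\tilde x)\cdot\nu_x)_\pm|\nabla u(x,t)|^2K_{(\tilde x,\tilde t)}(x,t)\,dS(x),\quad 0<t<\tilde t,$$ with $(\cdot)_\pm\ge0$ positive/negative parts. For $r>0$ let $B_r(\tilde x)$ be the open ball of radius $r$ centered at $\tilde x$, $\partial\Omega_r(\tilde x):=B_r(\tilde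 x)\cap\partial\Omega$, and for $0<r<\sqrt{\tilde t/2}$ $$\beta(r):=r^{\frac{2(p+1)}{p-1}-n-1}\sup_{\tilde x\in\Omega,\ \mathrm{dist}(\tilde x,\partial\Omega)<r}\int_{\tilde t-2r^2}^{\tilde t-r^2}\int_{\partial\Omega_r(\tilde x)}|\nabla u(x,t)|^2\,dS(x)\,dt.$$ *)

theory Defs
  imports "HOL-Analysis.Analysis"
begin

text \<open>Convention d^0 = 1 (also for d = 0), so that H^0 is the counting measure.\<close>
definition hpow :: "real \<Rightarrow> real \<Rightarrow> real" where
  "hpow d s = (if s = 0 then 1 else d powr s)"

definition hausdorff_pre :: "real \<Rightarrow> real \<Rightarrow> 'a::metric_space set \<Rightarrow> ennreal" where
  "hausdorff_pre s \<delta> A =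
     (INF C \<in> {C :: nat \<Rightarrow> 'a set. A \<subseteq> (\<Union>i. C i) \<and> (\<forall>i. bounded (C i) \<and> diameter (C i) \<le> \<delta>)}.
        (\<Sum>i. (if C i = {} then 0
               else ennreal (unit_ball_vol s * hpow (diameter (C i) / 2) s))))"

definition hausdorff_outer :: "real \<Rightarrow> 'a::metric_space set \<Rightarrow> ennreal" where
  "hausdorff_outer s A = (SUP \<delta> \<in> {0<..}. hausdorff_pre s \<delta> A)"

definition hausdorff_measure :: "real \<Rightarrow> 'a::euclidean_space measure" where
  "hausdorff_measure s = measure_of UNIV (sets borel) (hausdorff_outer s)"

definition surface_measure :: "'a::euclidean_space measure" where
  "surface_measure = hausdorff_measure (real (DIM('a) - 1))"

text \<open>Uniformly C^(2+alpha) domain: open, connected, nonempty, and there are r0, M > 0 such that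
  near every boundary point x0, in a rotated frame with "vertical" unit direction e,
  Omega coincides in ball x0 r0 with the supergraph of a function phi of the horizontal
  variable (phi invariant along e) with C^(2+alpha) norm bounded by M.\<close>
definition unif_C2alpha_domain :: "real \<Rightarrow> 'a::euclidean_space set \<Rightarrow> bool" where
  "unif_C2alpha_domain \<alpha> \<Omega> \<longleftrightarrow> open \<Omega> \<and> connected \<Omega> \<and> \<Omega> \<noteq> {} \<and>
     (\<exists>r0>0. \<exists>M>0. \<forall>x0\<in>frontier \<Omega>. \<exists>e \<phi> g H.
        norm e = 1 \<and>
        (\<forall>y s. \<phi> (y + s *\<^sub>R e) = \<phi> y) \<and>
        (\<forall>y. (\<phi> has_derivative (\<lambda>h. g y \<bullet> h)) (at y)) \<and>
        (\<forall>y. (g has_derivative blinfun_apply (H y)) (at y)) \<and>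
        (\<forall>y. \<bar>\<phi> y\<bar> \<le> M \<and> norm (g y) \<le> M \<and> norm (H y) \<le> M) \<and>
        (\<forall>y z. norm (H y - H z) \<le> M * norm (y - z) powr \<alpha>) \<and>
        \<Omega> \<inter> ball x0 r0 = {x \<in> ball x0 r0. (x - x0) \<bullet> e > \<phi> (x - x0)})"

definition ext_normal :: "'a::euclidean_space set \<Rightarrow> 'a \<Rightarrow> 'a" where
  "ext_normal \<Omega> x = (THE \<nu>. norm \<nu> = 1 \<and>
     (\<forall>\<epsilon>>0. \<exists>\<rho>>0. \<forall>y\<in>ball x \<rho>.
        ((y - x) \<bullet> \<nu> < - \<epsilon> * norm (y - x) \<longrightarrow> y \<in> \<Omega>) \<and>
        ((y - x) \<bullet> \<nu> > \<epsilon> * norm (y - x) \<longrightarrow> y \<notin> \<Omega>)))"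

text \<open>u is a classical solution of u_t = Lap u + |u|^(p-1) u in Omega x (0,T), u = 0 on the
  boundary, u(.,0) = u0 in L^infty, with finite maximal existence time T (blow-up in L^infty).
  gu, hu, ut are gradient, Hessian and time derivative; they are required to be continuous
  (i.e. extend continuously) and bounded on closure Omega x [T1,T2]; gu on the boundary is
  therefore the boundary trace of the gradient.\<close>
definition classical_solution ::
  "'a::euclidean_space set \<Rightarrow> real \<Rightarrow> real \<Rightarrow> ('a \<Rightarrow> real) \<Rightarrow> ('a \<Rightarrow> real \<Rightarrow> real) \<Rightarrow>
   ('a \<Rightarrow> real \<Rightarrow> 'a) \<Rightarrow> ('a \<Rightarrow> real \<Rightarrow> ('a \<Rightarrow>\<^sub>L 'a)) \<Rightarrow> ('a \<Rightarrow> real \<Rightarrow> real) \<Rightarrow> bool" where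
  "classical_solution \<Omega> p T u0 u gu hu ut \<longleftrightarrow>
     0 < T \<and>
     continuous_on (closure \<Omega> \<times> {0<..<T}) (\<lambda>z. u (fst z) (snd z)) \<and>
     (\<forall>x\<in>\<Omega>. \<forall>t\<in>{0<..<T}.
        ((\<lambda>y. u y t) has_derivative (\<lambda>h. gu x t \<bullet> h)) (at x) \<and>
        ((\<lambda>y. gu y t) has_derivative blinfun_apply (hu x t)) (at x) \<and>
        ((\<lambda>s. u x s) has_real_derivative ut x t) (at t) \<and>
        ut x t = (\<Sum>i\<in>Basis. blinfun_apply (hu x t) i \<bullet> i) + \<bar>u x t\<bar> powr (p - 1) * u x t) \<and>
     (\<forall>x\<in>frontier \<Omega>. \<forall>t\<in>{0<..<T}. u x t = 0) \<and>
     (\<forall>T1 T2. 0 < T1 \<and> T1 < T2 \<and> T2 < T \<longrightarrow>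
        continuous_on (closure \<Omega> \<times> {T1..T2}) (\<lambda>z. gu (fst z) (snd z)) \<and>
        bounded ((\<lambda>z. gu (fst z) (snd z)) ` (closure \<Omega> \<times> {T1..T2})) \<and>
        continuous_on (closure \<Omega> \<times> {T1..T2}) (\<lambda>z. hu (fst z) (snd z)) \<and>
        bounded ((\<lambda>z. hu (fst z) (snd z)) ` (closure \<Omega> \<times> {T1..T2})) \<and>
        continuous_on (closure \<Omega> \<times> {T1..T2}) (\<lambda>z. ut (fst z) (snd z)) \<and>
        bounded ((\<lambda>z. ut (fst z) (snd z)) ` (closure \<Omega> \<times> {T1..T2}))) \<and>
     u0 \<in> borel_measurable lebesgue \<and> (\<exists>M. \<forall>x\<in>\<Omega>. \<bar>u0 x\<bar> \<le> M) \<and>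
     (\<forall>K. compact K \<and> K \<subseteq> \<Omega> \<longrightarrow>
        ((\<lambda>t. \<integral>\<^sup>+ x\<in>K. ennreal \<bar>u x t - u0 x\<bar> \<partial>lborel) \<longlongrightarrow> 0) (at_right 0)) \<and>
     (\<forall>\<tau>\<in>{0<..<T}. bounded ((\<lambda>z. u (fst z) (snd z)) ` (\<Omega> \<times> {0<..\<tau>}))) \<and>
     \<not> bounded ((\<lambda>z. u (fst z) (snd z)) ` (\<Omega> \<times> {0<..<T}))"

definition heat_K :: "'a::euclidean_space \<Rightarrow> real \<Rightarrow> 'a \<Rightarrow> real \<Rightarrow> real" where
  "heat_K xt tt x t = (tt - t) powr (- real DIM('a) / 2) * exp (- (norm (x - xt))\<^sup>2 / (4 * (tt - t)))"

definition B_plus :: "'a::euclidean_space set \<Rightarrow> real \<Rightarrow> ('a \<Rightarrow> real \<Rightarrow> 'a) \<Rightarrow> 'a \<Rightarrow> real \<Rightarrow> real \<Rightarrow> ennreal" where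
  "B_plus \<Omega> p gu xt tt t = ennreal ((tt - t) powr (2 / (p - 1))) *
     (\<integral>\<^sup>+ x\<in>frontier \<Omega>. ennreal (max 0 ((x - xt) \<bullet> ext_normal \<Omega> x) * (norm (gu x t))\<^sup>2 * heat_K xt tt x t)
        \<partial>surface_measure)"

definition beta :: "'a::euclidean_space set \<Rightarrow> real \<Rightarrow> ('a \<Rightarrow> real \<Rightarrow> 'a) \<Rightarrow> real \<Rightarrow> real \<Rightarrow> ennreal" where
  "beta \<Omega> p gu tt r = ennreal (r powr (2 * (p + 1) / (p - 1) - real DIM('a) - 1)) *
     (SUP xt \<in> {x \<in> \<Omega>. infdist x (frontier \<Omega>) < r}.
        \<integral>\<^sup>+ t\<in>{tt - 2 * r\<^sup>2 .. tt - r\<^sup>2}.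
           (\<integral>\<^sup>+ x\<in>frontier \<Omega> \<inter> ball xt r. ennreal ((norm (gu x t))\<^sup>2) \<partial>surface_measure) \<partial>lborel)"

end

theory Submission
  imports Defs
begin


lemma nn_integral_cmult_le:
  "c * integral\<^sup>N M f \<le> (\<integral>\<^sup>+x. c * f x \<partial>M)"
proof -
  have "c * integral\<^sup>N M f = (SUP g \<in> {g. simple_function M g \<and> g \<le> f}. c * integral\<^sup>S M g)"
    unfolding nn_integral_def by (simp add: SUP_mult_left_ennreal)
  also have "\<dots> \<le> (\<integral>\<^sup>+x. c * f x \<partial>M)"
  proof (rule SUP_least)
    fix g assume g: "g \<in> {g. simple_function M g \<and> g \<le> f}"
    then have sg: "simple_function M g" and gf: "g \<le> f" by auto
    have "c * integral\<^sup>S M g = integral\<^sup>S M (\<lambda>x. c * g x)" using sg by simp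
    also have "\<dots> = integral\<^sup>N M (\<lambda>x. c * g x)"
      using sg by (intro nn_integral_eq_simple_integral[symmetric]) auto
    also have "\<dots> \<le> (\<integral>\<^sup>+x. c * f x \<partial>M)"
      using gf by (intro nn_integral_mono) (auto simp: le_fun_def intro: mult_left_mono)
    finally show "c * integral\<^sup>S M g \<le> (\<integral>\<^sup>+x. c * f x \<partial>M)" .
  qed
  finally show ?thesis .
qed

lemma nn_integral_cmult_any:
  assumes "0 \<le> a"
  shows "(\<integral>\<^sup>+x. ennreal a * f x \<partial>M) = ennreal a * integral\<^sup>N M f"
proof (cases "a = 0")
  case True then show ?thesis by simp
next
  case False
  then have apos: "a > 0" using assms by simp
  have ic: "ennreal (inverse a) * ennreal a = 1"
    using apos by (simp add: ennreal_mult[symmetric])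
  have ic2: "ennreal a * ennreal (inverse a) = 1" using ic by (simp add: mult.commute)
  have "ennreal (inverse a) * (\<integral>\<^sup>+x. ennreal a * f x \<partial>M) \<le> (\<integral>\<^sup>+x. ennreal (inverse a) * (ennreal a * f x) \<partial>M)"
    by (rule nn_integral_cmult_le)
  also have "\<dots> = integral\<^sup>N M f" by (simp add: mult.assoc[symmetric] ic)
  finally have "ennreal a * (ennreal (inverse a) * (\<integral>\<^sup>+x. ennreal a * f x \<partial>M)) \<le> ennreal a * integral\<^sup>N M f"
    by (rule mult_left_mono) simp
  then have "(\<integral>\<^sup>+x. ennreal a * f x \<partial>M) \<le> ennreal a * integral\<^sup>N M f"
    by (simp add: mult.assoc[symmetric] ic2)
  then show ?thesis using nn_integral_cmult_le[of "ennreal a" M f] by simp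
qed



definition NP :: "'a::euclidean_space set \<Rightarrow> 'a \<Rightarrow> 'a \<Rightarrow> bool" where
  "NP \<Omega> x \<nu> \<longleftrightarrow> norm \<nu> = 1 \<and>
     (\<forall>\<epsilon>>0. \<exists>\<rho>>0. \<forall>y\<in>ball x \<rho>.
        ((y - x) \<bullet> \<nu> < - \<epsilon> * norm (y - x) \<longrightarrow> y \<in> \<Omega>) \<and>
        ((y - x) \<bullet> \<nu> > \<epsilon> * norm (y - x) \<longrightarrow> y \<notin> \<Omega>))"

lemma NP_unique:
  assumes n1: "NP \<Omega> x \<nu>1" and n2: "NP \<Omega> x \<nu>2"
  shows "\<nu>1 = \<nu>2"
proof (rule ccontr)
  assume ne: "\<nu>1 \<noteq> \<nu>2"
  define h where "h = \<nu>1 - \<nu>2"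
  have hne: "h \<noteq> 0" using ne by (simp add: h_def)
  have u1: "\<nu>1 \<bullet> \<nu>1 = 1" using n1 unfolding NP_def by (simp add: dot_square_norm)
  have u2: "\<nu>2 \<bullet> \<nu>2 = 1" using n2 unfolding NP_def by (simp add: dot_square_norm)
  define k where "k = 1 - \<nu>1 \<bullet> \<nu>2"
  have hh: "(norm h)\<^sup>2 = 2 * k"
    unfolding power2_norm_eq_inner h_def k_def
    using u1 u2 by (simp add: inner_diff_left inner_diff_right inner_commute)
  have nh: "norm h > 0" using hne by simp
  have "(norm h)\<^sup>2 > 0" using nh by simp
  then have kpos: "k > 0" using hh by simp
  have h1: "h \<bullet> \<nu>1 = k" unfolding h_def k_def using u1 by (simp add: inner_diff_left inner_diff_right inner_commute)
  have h2: "h \<bullet> \<nu>2 = - k" unfolding h_def k_def using u2 by (simp add: inner_diff_left inner_diff_right inner_commute)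
  define \<epsilon> where "\<epsilon> = k / (2 * norm h)"
  have ep: "\<epsilon> > 0" using kpos nh by (simp add: \<epsilon>_def)
  obtain \<rho>1 where r1: "\<rho>1 > 0" and P1: "\<forall>y\<in>ball x \<rho>1. ((y - x) \<bullet> \<nu>1 > \<epsilon> * norm (y - x) \<longrightarrow> y \<notin> \<Omega>)"
    using n1 ep unfolding NP_def by meson
  obtain \<rho>2 where r2: "\<rho>2 > 0" and P2: "\<forall>y\<in>ball x \<rho>2. ((y - x) \<bullet> \<nu>2 < - \<epsilon> * norm (y - x) \<longrightarrow> y \<in> \<Omega>)"
    using n2 ep unfolding NP_def by meson
  define s where "s = min \<rho>1 \<rho>2 / (2 * norm h)"
  have sp: "s > 0" using r1 r2 nh by (simp add: s_def)
  define y where "y = x + s *\<^sub>R h"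
  have dy: "norm (y - x) = s * norm h" using sp by (simp add: y_def)
  have sh: "s * norm h = min \<rho>1 \<rho>2 / 2" using nh by (simp add: s_def)
  have yb1: "y \<in> ball x \<rho>1" using dy sh r1 r2 by (simp add: dist_norm norm_minus_commute)
  have yb2: "y \<in> ball x \<rho>2" using dy sh r1 r2 by (simp add: dist_norm norm_minus_commute)
  have eps_n: "\<epsilon> * norm (y - x) = s * k / 2" using dy nh by (simp add: \<epsilon>_def)
  have "(y - x) \<bullet> \<nu>1 = s * k" using h1 by (simp add: y_def)
  then have "\<epsilon> * norm (y - x) < (y - x) \<bullet> \<nu>1" using eps_n mult_pos_pos[OF sp kpos] by linarith
  then have "y \<notin> \<Omega>" using P1 yb1 by blast
  moreover have "(y - x) \<bullet> \<nu>2 = - (s * k)" using h2 by (simp add: y_def)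
  then have "(y - x) \<bullet> \<nu>2 < - \<epsilon> * norm (y - x)" using eps_n mult_pos_pos[OF sp kpos] by linarith
  then have "y \<in> \<Omega>" using P2 yb2 by blast
  ultimately show False by simp
qed

lemma ext_normal_eqI: "NP \<Omega> x \<nu> \<Longrightarrow> ext_normal \<Omega> x = \<nu>"
  unfolding ext_normal_def
  by (rule the_equality) (use NP_unique in \<open>auto simp: NP_def\<close>)

lemma NP_graph:
  fixes \<Omega> :: "'a::euclidean_space set"
  assumes frame: "\<Omega> \<inter> ball x0 r0 = {x \<in> ball x0 r0. (x - x0) \<bullet> e > \<phi> (x - x0)}"
    and der: "(\<phi> has_derivative (\<lambda>h. gv \<bullet> h)) (at (x - x0))"
    and xb: "x \<in> ball x0 r0" and bd: "(x - x0) \<bullet> e = \<phi> (x - x0)"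
    and gne: "gv \<noteq> e"
  shows "NP \<Omega> x ((1 / norm (gv - e)) *\<^sub>R (gv - e))"
proof -
  define D where "D = norm (gv - e)"
  define \<nu> where "\<nu> = (1 / D) *\<^sub>R (gv - e)"
  define w where "w = x - x0"
  have Dp: "D > 0" using gne by (simp add: D_def)
  have nu1: "norm \<nu> = 1" using Dp by (simp add: \<nu>_def D_def)
  have memb: "y \<in> \<Omega> \<longleftrightarrow> (y - x0) \<bullet> e > \<phi> (y - x0)" if "y \<in> ball x0 r0" for y
    using frame that by blast
  have "\<exists>\<rho>>0. \<forall>y\<in>ball x \<rho>.
        ((y - x) \<bullet> \<nu> < - \<epsilon> * norm (y - x) \<longrightarrow> y \<in> \<Omega>) \<and>
        ((y - x) \<bullet> \<nu> > \<epsilon> * norm (y - x) \<longrightarrow> y \<notin> \<Omega>)" if ep: "\<epsilon> > 0" for \<epsilon>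
  proof -
    define \<eta> where "\<eta> = \<epsilon> * D / 2"
    have etap: "\<eta> > 0" using ep Dp by (simp add: \<eta>_def)
    obtain d where dp: "d > 0" and dd: "\<forall>y. norm (y - w) < d \<longrightarrow>
        norm (\<phi> y - \<phi> w - gv \<bullet> (y - w)) \<le> \<eta> * norm (y - w)"
      using der etap unfolding has_derivative_at_alt w_def by blast
    define \<rho> where "\<rho> = min d (r0 - dist x0 x)"
    have rp: "\<rho> > 0" using dp xb by (simp add: \<rho>_def)
    have "\<forall>y\<in>ball x \<rho>.
        ((y - x) \<bullet> \<nu> < - \<epsilon> * norm (y - x) \<longrightarrow> y \<in> \<Omega>) \<and>
        ((y - x) \<bullet> \<nu> > \<epsilon> * norm (y - x) \<longrightarrow> y \<notin> \<Omega>)"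
    proof
      fix y assume yb: "y \<in> ball x \<rho>"
      define h where "h = y - x"
      have nh: "norm h < d" using yb by (simp add: h_def \<rho>_def dist_norm norm_minus_commute)
      have yb0: "y \<in> ball x0 r0"
      proof -
        have "dist x0 y \<le> dist x0 x + dist x y" by (rule dist_triangle)
        then show ?thesis using yb by (simp add: \<rho>_def)
      qed
      have yw: "y - x0 = w + h" by (simp add: w_def h_def)
      have R: "\<bar>\<phi> (w + h) - \<phi> w - gv \<bullet> h\<bar> \<le> \<eta> * norm h"
        using dd[rule_format, of "w + h"] nh by simp
      have hnu: "D * (h \<bullet> \<nu>) = gv \<bullet> h - e \<bullet> h"
        using Dp by (simp add: \<nu>_def inner_diff_right inner_commute)
      have we: "w \<bullet> e = \<phi> w" using bd by (simp add: w_def)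
      have V: "(y - x0) \<bullet> e - \<phi> (y - x0) = - (\<phi> (w + h) - \<phi> w - gv \<bullet> h) - D * (h \<bullet> \<nu>)"
        unfolding yw hnu using we by (simp add: inner_add_left inner_add_right inner_commute)
      have R1: "\<phi> (w + h) - \<phi> w - gv \<bullet> h \<le> \<eta> * norm h" using R by linarith
      have R2: "- (\<eta> * norm h) \<le> \<phi> (w + h) - \<phi> w - gv \<bullet> h" using R by linarith
      have en: "\<eta> * norm h = (D * (\<epsilon> * norm h)) / 2" by (simp add: \<eta>_def)
      show "((y - x) \<bullet> \<nu> < - \<epsilon> * norm (y - x) \<longrightarrow> y \<in> \<Omega>) \<and>
        ((y - x) \<bullet> \<nu> > \<epsilon> * norm (y - x) \<longrightarrow> y \<notin> \<Omega>)"
      proof (intro conjI impI)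
        assume a: "(y - x) \<bullet> \<nu> < - \<epsilon> * norm (y - x)"
        then have hnz: "norm h > 0" using ep by (cases "h = 0") (auto simp: h_def)
        have m1: "D * (h \<bullet> \<nu>) < D * (- \<epsilon> * norm h)"
          using mult_strict_left_mono[OF a Dp] by (simp add: h_def)
        have m2: "D * (\<epsilon> * norm h) > 0" using Dp ep hnz by simp
        have "(y - x0) \<bullet> e - \<phi> (y - x0) > 0"
          using V R1 R2 m1 m2 en by linarith
        then show "y \<in> \<Omega>" using memb[OF yb0] by simp
      next
        assume a: "(y - x) \<bullet> \<nu> > \<epsilon> * norm (y - x)"
        have m1: "D * (h \<bullet> \<nu>) > D * (\<epsilon> * norm h)"
          using mult_strict_left_mono[OF a Dp] by (simp add: h_def)
        have m2: "D * (\<epsilon> * norm h) \<ge> 0" using Dp ep by simp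
        have "(y - x0) \<bullet> e - \<phi> (y - x0) < 0"
          using V R1 R2 m1 m2 en by linarith
        then show "y \<notin> \<Omega>" using memb[OF yb0] by simp
      qed
    qed
    then show ?thesis using rp by blast
  qed
  then show ?thesis unfolding NP_def using nu1 by (simp add: \<nu>_def D_def)
qed

lemma frame_geom:
  fixes \<Omega> :: "'a::euclidean_space set"
  assumes opn: "open \<Omega>"
    and ne1: "norm e = 1"
    and inv: "\<forall>y s. \<phi> (y + s *\<^sub>R e) = \<phi> y"
    and der: "\<forall>y. (\<phi> has_derivative (\<lambda>h. g y \<bullet> h)) (at y)"
    and gM: "\<forall>y. norm (g y) \<le> M"
    and frame: "\<Omega> \<inter> ball x0 r0 = {x \<in> ball x0 r0. (x - x0) \<bullet> e > \<phi> (x - x0)}"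
    and x0f: "x0 \<in> frontier \<Omega>"
    and rp: "0 < r" and rr: "(2*M+5)*r < r0" and Mp: "0 \<le> M"
  shows "\<exists>xh\<in>\<Omega>. \<forall>x\<in>frontier \<Omega> \<inter> ball x0 (2*r).
           norm (x - xh) \<le> (2*M+5)*r \<and> r / (1+M) \<le> (x - xh) \<bullet> ext_normal \<Omega> x"
proof -
  have cont: "continuous_on UNIV \<phi>"
    apply (rule continuous_at_imp_continuous_on)
    apply (rule ballI)
    apply (rule has_derivative_continuous)
    apply (rule der[rule_format])
    done
  have ge0: "g y \<bullet> e = 0" for y
  proof -
    have d1: "((\<lambda>s::real. y + s *\<^sub>R e) has_derivative (\<lambda>s. s *\<^sub>R e)) (at 0)"
      by (auto intro!: derivative_eq_intros)
    have d2: "(\<phi> has_derivative (\<lambda>h. g y \<bullet> h)) (at ((\<lambda>s::real. y + s *\<^sub>R e) 0))"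
      using der by simp
    have "((\<lambda>s. \<phi> (y + s *\<^sub>R e)) has_derivative (\<lambda>s. g y \<bullet> (s *\<^sub>R e))) (at 0)"
      using has_derivative_compose[OF d1 d2] by simp
    moreover have "((\<lambda>s::real. \<phi> (y + s *\<^sub>R e)) has_derivative (\<lambda>s. 0)) (at 0)"
      using inv by simp
    ultimately have "(\<lambda>s::real. g y \<bullet> (s *\<^sub>R e)) = (\<lambda>s. 0)"
      by (rule has_derivative_unique)
    then have "g y \<bullet> (1 *\<^sub>R e) = 0" by (metis (mono_tags))
    then show ?thesis by simp
  qed
  have "(2*M+5)*r > 0" using Mp rp by simp
  then have r0p: "r0 > 0" using rr by linarith
  have bdry: "(x - x0) \<bullet> e = \<phi> (x - x0)" if xf: "x \<in> frontier \<Omega>" and xb: "x \<in> ball x0 r0" for x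
  proof -
    have xn: "x \<notin> \<Omega>" using xf opn by (simp add: frontier_def interior_open)
    then have le: "\<not> ((x - x0) \<bullet> e > \<phi> (x - x0))" using frame xb by blast
    have "\<not> ((x - x0) \<bullet> e < \<phi> (x - x0))"
    proof
      assume lt: "(x - x0) \<bullet> e < \<phi> (x - x0)"
      define U where "U = ball x0 r0 \<inter> {y. (y - x0) \<bullet> e < \<phi> (y - x0)}"
      have cU: "continuous_on UNIV (\<lambda>y. \<phi> (y - x0))"
        by (rule continuous_on_compose2[OF cont]) (auto intro!: continuous_intros)
      have "open {y. (y - x0) \<bullet> e < \<phi> (y - x0)}"
        by (rule open_Collect_less) (auto intro!: continuous_intros cU)
      then have oU: "open U" by (simp add: U_def open_Int)
      have "U \<inter> \<Omega> = {}"
      proof -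
        { fix y assume yU: "y \<in> U" and yO: "y \<in> \<Omega>"
          then have "y \<in> \<Omega> \<inter> ball x0 r0" by (simp add: U_def)
          then have "(y - x0) \<bullet> e > \<phi> (y - x0)" using frame by blast
          with yU have False by (simp add: U_def) }
        then show ?thesis by blast
      qed
      then have "U \<inter> closure \<Omega> = {}" using oU open_Int_closure_eq_empty by blast
      moreover have "x \<in> U" using lt xb by (simp add: U_def)
      moreover have "x \<in> closure \<Omega>" using xf by (simp add: frontier_def)
      ultimately show False by blast
    qed
    then show ?thesis using le by linarith
  qed
  have phi0: "\<phi> 0 = 0" using bdry[OF x0f] r0p by simp
  define a where "a = 2*M+3"
  define xh where "xh = x0 + (a*r) *\<^sub>R e"
  have ar: "a * r < r0" using rr rp by (simp add: a_def algebra_simps)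
  have apos: "a * r > 0" using rp Mp by (simp add: a_def)
  have xhb: "xh \<in> ball x0 r0" using ar apos ne1 by (simp add: xh_def dist_norm)
  have "xh - x0 = 0 + (a*r) *\<^sub>R e" by (simp add: xh_def)
  moreover have "\<phi> (0 + (a*r) *\<^sub>R e) = \<phi> 0" using inv by blast
  ultimately have "\<phi> (xh - x0) = 0" using phi0 by simp
  moreover have "(xh - x0) \<bullet> e = a * r" using ne1 by (simp add: xh_def dot_square_norm)
  ultimately have "xh \<in> {x \<in> ball x0 r0. (x - x0) \<bullet> e > \<phi> (x - x0)}" using xhb apos by simp
  then have xhO: "xh \<in> \<Omega>" unfolding frame[symmetric] by blast
  have "\<forall>x\<in>frontier \<Omega> \<inter> ball x0 (2*r).
           norm (x - xh) \<le> (2*M+5)*r \<and> r / (1+M) \<le> (x - xh) \<bullet> ext_normal \<Omega> x"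
  proof
    fix x assume xin: "x \<in> frontier \<Omega> \<inter> ball x0 (2*r)"
    define w where "w = x - x0"
    define gv where "gv = g w"
    have nw: "norm w < 2*r" using xin by (simp add: w_def dist_norm norm_minus_commute)
    have xb: "x \<in> ball x0 r0"
    proof -
      have "2*r \<le> (2*M+5)*r" using rp Mp by (simp add: algebra_simps)
      then show ?thesis using nw rr by (simp add: w_def dist_norm norm_minus_commute)
    qed
    have bd: "(x - x0) \<bullet> e = \<phi> (x - x0)" by (rule bdry) (use xin xb in auto)
    have gve: "gv \<bullet> e = 0" by (simp add: gv_def ge0)
    have ee: "e \<bullet> e = 1" using ne1 by (simp add: dot_square_norm)
    have gne: "gv \<noteq> e" using gve ee by auto
    have NPx: "NP \<Omega> x ((1 / norm (gv - e)) *\<^sub>R (gv - e))"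
      by (rule NP_graph[OF frame _ xb bd gne]) (use der in \<open>simp add: gv_def w_def\<close>)
    have en: "ext_normal \<Omega> x = (1 / norm (gv - e)) *\<^sub>R (gv - e)"
      by (rule ext_normal_eqI[OF NPx])
    have xxh: "x - xh = w - (a*r) *\<^sub>R e" by (simp add: w_def xh_def)
    have "norm (x - xh) \<le> norm w + norm ((a*r) *\<^sub>R e)" unfolding xxh by (rule norm_triangle_ineq4)
    also have "\<dots> = norm w + a * r" using ne1 apos by simp
    finally have dist1: "norm (x - xh) \<le> (2*M+5)*r" using nw by (simp add: a_def algebra_simps)
    have cs1: "\<bar>w \<bullet> gv\<bar> \<le> norm w * norm gv" by (rule Cauchy_Schwarz_ineq2)
    have "norm w * norm gv \<le> (2*r) * M"
      using nw gM rp by (intro mult_mono) (auto simp: gv_def)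
    then have wg: "w \<bullet> gv \<ge> - (2*r*M)" using cs1 by linarith
    have cs2: "\<bar>w \<bullet> e\<bar> \<le> norm w * norm e" by (rule Cauchy_Schwarz_ineq2)
    then have we: "w \<bullet> e \<le> 2*r" using nw ne1 by simp
    have ip: "(x - xh) \<bullet> (gv - e) = w \<bullet> gv - w \<bullet> e + a * r"
      unfolding xxh using gve ee by (simp add: inner_diff_left inner_diff_right inner_commute)
    have ipr: "(x - xh) \<bullet> (gv - e) \<ge> r" using ip wg we by (simp add: a_def algebra_simps)
    define D where "D = norm (gv - e)"
    have Dp: "D > 0" using gne by (simp add: D_def)
    have "D \<le> norm gv + norm e" unfolding D_def by (rule norm_triangle_ineq4)
    moreover have "norm gv \<le> M" using gM by (simp add: gv_def)
    ultimately have DM: "D \<le> 1 + M" using ne1 by simp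
    have "(x - xh) \<bullet> ext_normal \<Omega> x = ((x - xh) \<bullet> (gv - e)) / D"
      by (simp add: en D_def)
    moreover have "r / (1+M) \<le> r / D"
      using Dp DM rp by (intro divide_left_mono) auto
    moreover have "r / D \<le> ((x - xh) \<bullet> (gv - e)) / D"
      using ipr Dp by (intro divide_right_mono) auto
    ultimately show "norm (x - xh) \<le> (2*M+5)*r \<and> r / (1+M) \<le> (x - xh) \<bullet> ext_normal \<Omega> x"
      using dist1 by simp
  qed
  then show ?thesis using xhO by blast
qed



lemma key_real:
  fixes r p s Dx N M A m :: real
  assumes rp: "r > 0" and p: "p > 1" and s1: "r^2 \<le> s" and s2: "s \<le> 2*r^2"
    and D0: "0 \<le> Dx" and DA: "Dx \<le> A*r" and A0: "0 \<le> A" and N0: "0 \<le> N" and M0: "0 \<le> M"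
    and mr: "r/(1+M) \<le> m"
  shows "r powr (2*(p+1)/(p-1) - N - 1) \<le> ((1+M) * 2 powr (N/2) * exp (A^2/4)) *
           (s powr (2/(p-1)) * (max 0 m * s powr (- N/2) * exp (- (Dx^2) / (4* s))))"
proof -
  define q where "q = 2/(p-1)"
  have qp: "q > 0" using p by (simp add: q_def)
  have r2p: "r^2 > 0" using rp by simp
  have sp: "s > 0" using s1 r2p by linarith
  have e1: "r powr (2*q) \<le> s powr q"
  proof -
    have "(r^2) powr q \<le> s powr q" using s1 qp by (intro powr_mono2) auto
    moreover have "(r^2) powr q = r powr (2*q)"
    proof -
      have rr2: "r^2 = r powr 2" using rp by (simp add: powr_numeral)
      have "(r^2) powr q = (r powr 2) powr q" by (simp only: rr2)
      also have "\<dots> = r powr (2*q)" by (simp only: powr_powr)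
      finally show ?thesis .
    qed
    ultimately show ?thesis by simp
  qed
  have e2: "2 powr (-N/2) * r powr (-N) \<le> s powr (-N/2)"
  proof -
    have "s powr (-N/2) \<ge> (2*r^2) powr (-N/2)" using s2 sp N0 by (intro powr_mono2') auto
    moreover have "(2*r^2) powr (-N/2) = 2 powr (-N/2) * r powr (-N)"
    proof -
      have rr2: "r^2 = r powr 2" using rp by (simp add: powr_numeral)
      have "(2*r^2) powr (-N/2) = 2 powr (-N/2) * (r^2) powr (-N/2)"
        using rp by (simp add: powr_mult)
      also have "(r^2) powr (-N/2) = (r powr 2) powr (-N/2)" by (simp only: rr2)
      also have "\<dots> = r powr (-N)" by (simp add: powr_powr)
      finally show ?thesis .
    qed
    ultimately show ?thesis by simp
  qed
  have e3: "exp (- (A^2/4)) \<le> exp (- (Dx^2) / (4* s))"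
  proof -
    have "Dx^2 \<le> (A*r)^2" using D0 DA by (intro power_mono) auto
    then have "Dx^2 \<le> A^2 * r^2" by (simp add: power_mult_distrib)
    also have "\<dots> \<le> A^2 * s" using s1 by (intro mult_left_mono) auto
    finally have "Dx^2 / (4* s) \<le> A^2/4" using sp by (simp add: divide_simps)
    then show ?thesis by simp
  qed
  have e4: "r/(1+M) \<le> max 0 m" using mr by simp
  define L where "L = r powr (2*q) * (r/(1+M) * (2 powr (-N/2) * r powr (-N)) * exp (- (A^2/4)))"
  have "L \<le> s powr q * (max 0 m * s powr (- N/2) * exp (- (Dx^2) / (4* s)))"
    unfolding L_def using e1 e2 e3 e4 rp M0
    by (intro mult_mono) (auto intro!: mult_nonneg_nonneg)
  then have le: "((1+M) * 2 powr (N/2) * exp (A^2/4)) * L \<le>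
     ((1+M) * 2 powr (N/2) * exp (A^2/4)) * (s powr q * (max 0 m * s powr (- N/2) * exp (- (Dx^2) / (4* s))))"
    using M0 by (intro mult_left_mono) auto
  have "((1+M) * 2 powr (N/2) * exp (A^2/4)) * L =
      ((1+M)/(1+M)) * (2 powr (N/2) * 2 powr (-N/2)) * (exp (A^2/4) * exp (- (A^2/4))) *
       (r powr (2*q) * r * r powr (-N))"
    unfolding L_def by (simp add: field_simps)
  also have "\<dots> = r powr (2*q) * r powr 1 * r powr (-N)"
    using M0 rp by (simp add: powr_add[symmetric] exp_add[symmetric])
  also have "\<dots> = r powr (2*q + 1 + (-N))" by (simp only: powr_add)
  also have "2*q + 1 + (-N) = 2*q + 1 - N" by simp
  also have "2*q + 1 - N = 2*(p+1)/(p-1) - N - 1" using p by (simp add: q_def field_simps)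
  finally show ?thesis using le by (simp add: q_def)
qed


theorem lemma2p3:
  fixes \<Omega> :: "'a::euclidean_space set" and p \<alpha> :: real
  assumes "1 < p" and "0 < \<alpha>" and "\<alpha> < 1" and "unif_C2alpha_domain \<alpha> \<Omega>"
  shows "\<exists>C>0. \<forall>T>0. \<exists>\<delta>. 0 < \<delta> \<and> \<delta> < sqrt (T / 2) \<and>
           (\<forall>u0 u gu hu ut tt. classical_solution \<Omega> p T u0 u gu hu ut \<and> T / 2 < tt \<and> tt < T \<longrightarrow>
              (SUP r \<in> {0<..<\<delta> / sqrt 2}. beta \<Omega> p gu tt r)
                \<le> ennreal C * (SUP xt \<in> \<Omega>. \<integral>\<^sup>+ t\<in>{tt - \<delta>\<^sup>2 .. tt}. B_plus \<Omega> p gu xt tt t \<partial>lborel))"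
proof -
  have p1: "1 < p" by fact
  have dom: "unif_C2alpha_domain \<alpha> \<Omega>" by fact
  then have opn: "open \<Omega>" unfolding unif_C2alpha_domain_def by blast
  from dom obtain r0 M where r0p: "r0 > 0" and Mp: "M > 0" and fr: "\<forall>x0\<in>frontier \<Omega>. \<exists>e \<phi> g H.
        norm e = 1 \<and>
        (\<forall>y s. \<phi> (y + s *\<^sub>R e) = \<phi> y) \<and>
        (\<forall>y. (\<phi> has_derivative (\<lambda>h. g y \<bullet> h)) (at y)) \<and>
        (\<forall>y. (g has_derivative blinfun_apply (H y)) (at y)) \<and>
        (\<forall>y. \<bar>\<phi> y\<bar> \<le> M \<and> norm (g y) \<le> M \<and> norm (H y) \<le> M) \<and>
        (\<forall>y z. norm (H y - H z) \<le> M * norm (y - z) powr \<alpha>) \<and>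
        \<Omega> \<inter> ball x0 r0 = {x \<in> ball x0 r0. (x - x0) \<bullet> e > \<phi> (x - x0)}"
    unfolding unif_C2alpha_domain_def by blast
  have geo: "\<exists>xh\<in>\<Omega>. \<forall>x\<in>frontier \<Omega> \<inter> ball x0 (2*r).
           norm (x - xh) \<le> (2*M+5)*r \<and> r / (1+M) \<le> (x - xh) \<bullet> ext_normal \<Omega> x"
    if x0f: "x0 \<in> frontier \<Omega>" and rp: "0 < r" and rr: "(2*M+5)*r < r0" for x0 r
  proof -
    obtain e \<phi> g H where c: "norm e = 1 \<and>
        (\<forall>y s. \<phi> (y + s *\<^sub>R e) = \<phi> y) \<and>
        (\<forall>y. (\<phi> has_derivative (\<lambda>h. g y \<bullet> h)) (at y)) \<and>
        (\<forall>y. (g has_derivative blinfun_apply (H y)) (at y)) \<and>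
        (\<forall>y. \<bar>\<phi> y\<bar> \<le> M \<and> norm (g y) \<le> M \<and> norm (H y) \<le> M) \<and>
        (\<forall>y z. norm (H y - H z) \<le> M * norm (y - z) powr \<alpha>) \<and>
        \<Omega> \<inter> ball x0 r0 = {x \<in> ball x0 r0. (x - x0) \<bullet> e > \<phi> (x - x0)}"
      using bspec[OF fr x0f] by (elim exE) blast
    note ne1 = c[THEN conjunct1]
    note inv = c[THEN conjunct2, THEN conjunct1]
    note der = c[THEN conjunct2, THEN conjunct2, THEN conjunct1]
    note bnd = c[THEN conjunct2, THEN conjunct2, THEN conjunct2, THEN conjunct2, THEN conjunct1]
    note frame = c[THEN conjunct2, THEN conjunct2, THEN conjunct2, THEN conjunct2, THEN conjunct2, THEN conjunct2]
    have gM: "\<forall>y. norm (g y) \<le> M" using bnd by blast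
    show ?thesis
      by (rule frame_geom[OF opn ne1 inv der gM frame x0f rp rr]) (use Mp in simp)
  qed
  define A where "A = 2*M+5"
  define N where "N = real DIM('a)"
  define C where "C = (1+M) * 2 powr (N/2) * exp (A^2/4)"
  have Ap: "A > 0" using Mp by (simp add: A_def)
  have Cp: "C > 0" using Mp by (simp add: C_def)
  have N0: "N \<ge> 0" by (simp add: N_def)
  show ?thesis
  proof (rule exI[of _ C], intro conjI allI impI)
    show "C > 0" by (rule Cp)
    fix T :: real assume Tp: "T > 0"
    define \<delta> where "\<delta> = min (sqrt (T/2) / 2) (r0 / A)"
    have dp: "\<delta> > 0" using Tp r0p Ap by (simp add: \<delta>_def)
    have sT: "sqrt (T/2) > 0" using Tp by simp
    have "\<delta> \<le> sqrt (T/2) / 2" unfolding \<delta>_def by (rule min.cobounded1)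
    then have dT: "\<delta> < sqrt (T/2)" using sT by linarith
    have dA: "\<delta> \<le> r0 / A" by (simp add: \<delta>_def)
    show "\<exists>\<delta>. 0 < \<delta> \<and> \<delta> < sqrt (T / 2) \<and>
           (\<forall>u0 u gu hu ut tt. classical_solution \<Omega> p T u0 u gu hu ut \<and> T / 2 < tt \<and> tt < T \<longrightarrow>
              (SUP r \<in> {0<..<\<delta> / sqrt 2}. beta \<Omega> p gu tt r)
                \<le> ennreal C * (SUP xt \<in> \<Omega>. \<integral>\<^sup>+ t\<in>{tt - \<delta>\<^sup>2 .. tt}. B_plus \<Omega> p gu xt tt t \<partial>lborel))"
    proof (rule exI[of _ \<delta>], intro conjI allI impI dp dT)
      fix u0 u gu hu ut tt
      let ?RHS = "ennreal C * (SUP xt \<in> \<Omega>. \<integral>\<^sup>+ t\<in>{tt - \<delta>\<^sup>2 .. tt}. B_plus \<Omega> p gu xt tt t \<partial>lborel)"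
      show "(SUP r \<in> {0<..<\<delta> / sqrt 2}. beta \<Omega> p gu tt r) \<le> ?RHS"
      proof (rule SUP_least)
        fix r assume rin: "r \<in> {0<..<\<delta> / sqrt 2}"
        then have rp: "r > 0" and rd: "r < \<delta> / sqrt 2" by auto
        have "r * sqrt 2 < \<delta>" using rd by (simp add: field_simps)
        then have "(r * sqrt 2)^2 < \<delta>^2" using rp by (intro power_strict_mono) auto
        then have r2: "2 * r^2 < \<delta>^2" by (simp add: power_mult_distrib)
        have "r < \<delta>"
        proof -
          have "r \<le> r * sqrt 2" using rp by simp
          then show ?thesis using \<open>r * sqrt 2 < \<delta>\<close> by linarith
        qed
        then have "r < r0 / A" using dA by linarith
        then have rA: "(2*M+5) * r < r0" using Ap by (simp add: field_simps A_def)
        define E where "E = 2 * (p + 1) / (p - 1) - real DIM('a) - 1"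
        let ?S = "{x \<in> \<Omega>. infdist x (frontier \<Omega>) < r}"
        let ?I = "\<lambda>xt. \<integral>\<^sup>+ t\<in>{tt - 2 * r\<^sup>2 .. tt - r\<^sup>2}.
           (\<integral>\<^sup>+ x\<in>frontier \<Omega> \<inter> ball xt r. ennreal ((norm (gu x t))\<^sup>2) \<partial>surface_measure) \<partial>lborel"
        have "beta \<Omega> p gu tt r = ennreal (r powr E) * (SUP xt \<in> ?S. ?I xt)"
          unfolding beta_def E_def by simp
        also have "\<dots> = (SUP xt \<in> ?S. ennreal (r powr E) * ?I xt)"
          by (simp add: SUP_mult_left_ennreal)
        also have "\<dots> \<le> ?RHS"
        proof (rule SUP_least)
          fix xt assume "xt \<in> ?S"
          show "ennreal (r powr E) * ?I xt \<le> ?RHS"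
          proof (cases "frontier \<Omega> \<inter> ball xt r = {}")
            case True
            then show ?thesis by simp
          next
            case False
            then obtain x0 where x0f: "x0 \<in> frontier \<Omega>" and x0b: "x0 \<in> ball xt r" by blast
            obtain xh where xhO: "xh \<in> \<Omega>" and xhP: "\<forall>x\<in>frontier \<Omega> \<inter> ball x0 (2*r).
               norm (x - xh) \<le> (2*M+5)*r \<and> r / (1+M) \<le> (x - xh) \<bullet> ext_normal \<Omega> x"
              using geo[OF x0f rp rA] by blast
            have xP: "norm (x - xh) \<le> A*r \<and> r / (1+M) \<le> (x - xh) \<bullet> ext_normal \<Omega> x"
              if "x \<in> frontier \<Omega>" "x \<in> ball xt r" for x
            proof -
              have "dist x0 x \<le> dist x0 xt + dist xt x" by (rule dist_triangle)
              moreover have "dist x0 xt < r" using x0b by (simp add: dist_commute)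
              ultimately have "x \<in> ball x0 (2*r)" using that by simp
              then show ?thesis using xhP that by (simp add: A_def)
            qed
            define q where "q = 2 / (p - 1)"
            define f where "f = (\<lambda>t. \<integral>\<^sup>+ x\<in>frontier \<Omega> \<inter> ball xt r. ennreal ((norm (gu x t))\<^sup>2) \<partial>surface_measure)"
            define B where "B = (\<lambda>t. B_plus \<Omega> p gu xh tt t)"
            define I where "I = {tt - 2 * r\<^sup>2 .. tt - r\<^sup>2}"
            define J where "J = {tt - \<delta>\<^sup>2 .. tt}"
            have IJ: "I \<subseteq> J" using r2 rp by (auto simp: I_def J_def)
            have pt: "ennreal (r powr E) * f t \<le> ennreal C * B t" if tI: "t \<in> I" for t
            proof -
              define s where "s = tt - t"
              have s1: "r^2 \<le> s" and s2: "s \<le> 2 * r^2" using tI by (auto simp: I_def s_def)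
              have sp: "s > 0" using s1 rp by (smt (verit) zero_less_power)
              define G where "G = (\<lambda>x. max 0 ((x - xh) \<bullet> ext_normal \<Omega> x) * (norm (gu x t))\<^sup>2 * heat_K xh tt x t)"
              have Bt: "B t = ennreal (s powr q) * (\<integral>\<^sup>+ x. ennreal (G x) * indicator (frontier \<Omega>) x \<partial>surface_measure)"
                by (simp add: B_def B_plus_def s_def q_def G_def)
              have "ennreal C * B t = ennreal (C * s powr q) * (\<integral>\<^sup>+ x. ennreal (G x) * indicator (frontier \<Omega>) x \<partial>surface_measure)"
                using Cp by (simp add: Bt ennreal_mult mult.assoc)
              also have "\<dots> = (\<integral>\<^sup>+ x. ennreal (C * s powr q) * (ennreal (G x) * indicator (frontier \<Omega>) x) \<partial>surface_measure)"
                using Cp by (intro nn_integral_cmult_any[symmetric]) simp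
              finally have R: "ennreal C * B t = \<dots>" .
              have L: "ennreal (r powr E) * f t = (\<integral>\<^sup>+ x. ennreal (r powr E) * (ennreal ((norm (gu x t))\<^sup>2) * indicator (frontier \<Omega> \<inter> ball xt r) x) \<partial>surface_measure)"
                unfolding f_def by (intro nn_integral_cmult_any[symmetric]) simp
              have "(\<integral>\<^sup>+ x. ennreal (r powr E) * (ennreal ((norm (gu x t))\<^sup>2) * indicator (frontier \<Omega> \<inter> ball xt r) x) \<partial>surface_measure)
                  \<le> (\<integral>\<^sup>+ x. ennreal (C * s powr q) * (ennreal (G x) * indicator (frontier \<Omega>) x) \<partial>surface_measure)"
              proof (rule nn_integral_mono)
                fix x
                show "ennreal (r powr E) * (ennreal ((norm (gu x t))\<^sup>2) * indicator (frontier \<Omega> \<inter> ball xt r) x)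
                   \<le> ennreal (C * s powr q) * (ennreal (G x) * indicator (frontier \<Omega>) x)"
                proof (cases "x \<in> frontier \<Omega> \<inter> ball xt r")
                  case False then show ?thesis by simp
                next
                  case True
                  then have xf: "x \<in> frontier \<Omega>" and xb: "x \<in> ball xt r" by auto
                  have xx: "norm (x - xh) \<le> A*r" and xm: "r / (1+M) \<le> (x - xh) \<bullet> ext_normal \<Omega> x"
                    using xP[OF xf xb] by auto
                  have kr: "r powr E \<le> C * (s powr q * (max 0 ((x - xh) \<bullet> ext_normal \<Omega> x) * s powr (- N / 2) * exp (- ((norm (x - xh))^2) / (4 * s))))"
                    unfolding E_def C_def q_def N_def
                    by (rule key_real[OF rp p1 s1 s2 norm_ge_zero xx _ _ _ xm])
                       (use Mp Ap in \<open>auto\<close>)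
                  have g0: "(norm (gu x t))\<^sup>2 \<ge> 0" by simp
                  have "r powr E * (norm (gu x t))\<^sup>2 \<le> C * (s powr q * (max 0 ((x - xh) \<bullet> ext_normal \<Omega> x) * s powr (- N / 2) * exp (- ((norm (x - xh))^2) / (4 * s)))) * (norm (gu x t))\<^sup>2"
                    using kr g0 by (rule mult_right_mono)
                  also have "\<dots> = C * s powr q * G x"
                    by (simp add: G_def heat_K_def s_def N_def mult_ac)
                  finally have rl: "r powr E * (norm (gu x t))\<^sup>2 \<le> C * s powr q * G x" .
                  have "ennreal (r powr E) * ennreal ((norm (gu x t))\<^sup>2) = ennreal (r powr E * (norm (gu x t))\<^sup>2)"
                    by (simp add: ennreal_mult)
                  also have "\<dots> \<le> ennreal (C * s powr q * G x)" by (rule ennreal_leI[OF rl])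
                  also have "\<dots> = ennreal (C * s powr q) * ennreal (G x)"
                    by (rule ennreal_mult') (use Cp in simp)
                  finally show ?thesis using True by simp
                qed
              qed
              then show ?thesis using L R by simp
            qed
            have "ennreal (r powr E) * ?I xt = ennreal (r powr E) * (\<integral>\<^sup>+ t. f t * indicator I t \<partial>lborel)"
              by (simp add: f_def I_def)
            also have "\<dots> = (\<integral>\<^sup>+ t. ennreal (r powr E) * (f t * indicator I t) \<partial>lborel)"
              by (intro nn_integral_cmult_any[symmetric]) simp
            also have "\<dots> \<le> (\<integral>\<^sup>+ t. ennreal C * (B t * indicator J t) \<partial>lborel)"
            proof (rule nn_integral_mono)
              fix t
              show "ennreal (r powr E) * (f t * indicator I t) \<le> ennreal C * (B t * indicator J t)"
              proof (cases "t \<in> I")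
                case False then show ?thesis by simp
              next
                case True
                then have "t \<in> J" using IJ by blast
                then show ?thesis using pt[OF True] True by simp
              qed
            qed
            also have "\<dots> = ennreal C * (\<integral>\<^sup>+ t. B t * indicator J t \<partial>lborel)"
              using Cp by (intro nn_integral_cmult_any) simp
            also have "\<dots> \<le> ?RHS"
              unfolding B_def J_def using xhO
              by (intro mult_left_mono SUP_upper) auto
            finally show ?thesis .
          qed
        qed
        finally show "beta \<Omega> p gu tt r \<le> ?RHS" .
      qed
    qed
  qed
qed

end
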